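(* Let $L$ be a positive integer and let $\Lambda$ be a subgroup of $\mathbb{Z}_L^2$. Then there exist unique integers $a,b$ with $a\mid L$, $b\mid L$, and a unique integer $s$ with $0\le s<b$ and $s\in\frac{ab}{\gcd(ab,L)}\mathbb{Z}$, such that $$\Lambda = A\mathbb{Z}_L^2=\begin{pmatrix} a & 0\\ s & b\end{pmatrix}\mathbb{Z}_L^2 .$$
   Context: $\mathbb{Z}_L=\mathbb{Z}/L\mathbb{Z}$. For an integer matrix $A$, $A\mathbb{Z}_L^2=\{Az \bmod L : z\in\mathbb{Z}_L^2\}$ denotes the image of $\mathbb{Z}_L^2$ under multiplication by $A$ with arithmetic modulo $L$. *)

theory Defs
  imports "HOL-Algebra.Group"
begin

definition ZL2 :: "int \<Rightarrow> (int \<times> int) monoid" where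
  "ZL2 L = \<lparr> carrier = {0..<L} \<times> {0..<L},
             mult = (\<lambda>p q. ((fst p + fst q) mod L, (snd p + snd q) mod L)),
             one = (0, 0) \<rparr>"

definition mat_image :: "int \<Rightarrow> int \<Rightarrow> int \<Rightarrow> int \<Rightarrow> (int \<times> int) set" where
  "mat_image L a s b =
     {((a * x) mod L, (s * x + b * y) mod L) | x y. x \<in> {0..<L} \<and> y \<in> {0..<L}}"

end

theory Submission
  imports Defs
begin

lemma arith_cond:
  fixes a b L s :: int
  assumes "a > 0" "b > 0" "a dvd L" "L > 0"
  shows "((a * b) div gcd (a * b) L) dvd s \<longleftrightarrow> b dvd s * (L div a)"
proof -
  obtain c where c: "L = a * c" using assms(3) by blast
  define g where "g = gcd b c"
  have gpos: "g > 0" using assms(2) g_def by simp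
  have "gcd (a*b) L = a * g" unfolding c g_def using gcd_mult_distrib_int[of a b c] assms(1) by simp
  hence e1: "(a * b) div gcd (a * b) L = b div g" using assms(1) by simp
  have e2: "L div a = c" using c assms(1) by simp
  obtain b' where b': "b = g * b'" unfolding g_def by (meson gcd_dvd1 dvdE)
  obtain c' where c': "c = g * c'" unfolding g_def by (meson gcd_dvd2 dvdE)
  have bd: "b div g = b'" using b' gpos by simp
  have cd: "c div g = c'" using c' gpos by simp
  have cop: "coprime b' c'"
    using div_gcd_coprime[of b c] assms(2) bd cd unfolding g_def by simp
  have "b div g = b'" by (rule bd)
  moreover have "b dvd s * c \<longleftrightarrow> b' dvd s * c'"
    using b' c' gpos by (simp add: mult.left_commute)
  moreover have "b' dvd s * c' \<longleftrightarrow> b' dvd s" using coprime_dvd_mult_left_iff[OF cop] by simp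
  ultimately show ?thesis using e1 e2 by simp
qed

lemma char:
  fixes a b L s :: int
  assumes "a > 0" "b > 0" "a dvd L" "b dvd L" "L > 0" "b dvd s * (L div a)"
  shows "mat_image L a s b = {(p,q). 0 \<le> p \<and> p < L \<and> 0 \<le> q \<and> q < L \<and> a dvd p \<and> b dvd (q - s * (p div a))}"
proof (rule equalityI; rule subsetI)
  fix z assume "z \<in> mat_image L a s b"
  then obtain x y where z: "z = ((a * x) mod L, (s * x + b * y) mod L)"
    unfolding mat_image_def by blast
  obtain c where c: "L = a * c" using assms(3) by blast
  have cdiv: "L div a = c" using c assms(1) by simp
  define m where "m = (a*x) div L"
  define n where "n = (s * x + b * y) div L"
  have p: "(a * x) mod L = a * (x - c * m)" using c m_def
    by (simp add: minus_div_mult_eq_mod[symmetric] algebra_simps)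
  have pd: "(a * x) mod L div a = x - c * m" using p assms(1) by simp
  have q: "(s * x + b * y) mod L = s * x + b * y - L * n" using n_def
    by (simp add: minus_div_mult_eq_mod[symmetric] algebra_simps)
  have "(s * x + b * y) mod L - s * ((a * x) mod L div a) = b * y - L * n + (s * c) * m"
    unfolding q pd by (simp add: algebra_simps)
  moreover have "b dvd b * y - L * n + (s * c) * m"
    using assms(4,6) cdiv by (simp add: dvd_diff dvd_add)
  ultimately have d2: "b dvd (s * x + b * y) mod L - s * ((a * x) mod L div a)" by simp
  have d1: "a dvd (a * x) mod L" unfolding p by simp
  have bd: "0 \<le> (a * x) mod L" "(a * x) mod L < L" "0 \<le> (s * x + b * y) mod L" "(s * x + b * y) mod L < L"
    using assms(5) by simp_all
  show "z \<in> {(p,q). 0 \<le> p \<and> p < L \<and> 0 \<le> q \<and> q < L \<and> a dvd p \<and> b dvd (q - s * (p div a))}"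
    unfolding z using d1 d2 bd by (simp only: mem_Collect_eq case_prod_conv)
next
  fix z assume "z \<in> {(p,q). 0 \<le> p \<and> p < L \<and> 0 \<le> q \<and> q < L \<and> a dvd p \<and> b dvd (q - s * (p div a))}"
  then obtain p q where z: "z = (p,q)" and r: "0 \<le> p" "p < L" "0 \<le> q" "q < L" "a dvd p" "b dvd (q - s * (p div a))"
    by blast
  obtain k where k: "p = a * k" using r(5) by blast
  have kd: "p div a = k" using k assms(1) by simp
  have k0: "0 \<le> k" using k r(1) assms(1) by (simp add: zero_le_mult_iff)
  have "1 * k \<le> a * k" using mult_right_mono[of 1 a k] k0 assms(1) by simp
  hence kL: "k < L" using k r(2) by simp
  obtain t where t: "q - s * k = b * t" using r(6) kd by blast
  have "(b * (t mod L)) mod L = (b * t) mod L" by (simp add: mod_mult_right_eq)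
  hence "(s * k + b * (t mod L)) mod L = (s * k + b * t) mod L" by (metis mod_add_right_eq)
  also have "\<dots> = q" using t r(3,4) by simp
  finally have e: "(s * k + b * (t mod L)) mod L = q" .
  have e2: "(a * k) mod L = p" using k r(1,2) by simp
  have "t mod L \<in> {0..<L}" using assms(5) by simp
  moreover have "k \<in> {0..<L}" using k0 kL by simp
  ultimately show "z \<in> mat_image L a s b" unfolding mat_image_def z using e e2 by blast
qed
lemma charS:
  fixes a b L s u v :: int
  assumes "a > 0" "b > 0" "a dvd L" "b dvd L" "L > 0" "b dvd s * (L div a)"
  shows "(u mod L, v mod L) \<in> mat_image L a s b \<longleftrightarrow> a dvd u \<and> b dvd (v - s * (u div a))"
proof -
  have "(u mod L, v mod L) \<in> mat_image L a s b \<longleftrightarrow> a dvd (u mod L) \<and> b dvd (v mod L - s * ((u mod L) div a))"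
    unfolding char[OF assms] using assms(5) by simp
  also have "\<dots> \<longleftrightarrow> a dvd u \<and> b dvd (v - s * (u div a))"
  proof (cases "a dvd u")
    case False
    then show ?thesis using assms(3) by (simp add: dvd_mod_iff)
  next
    case True
    then obtain k where k: "u = a * k" by blast
    obtain c where c: "L = a * c" using assms(3) by blast
    have cdiv: "L div a = c" using c assms(1) by simp
    have um: "u mod L = a * (k - c * (u div L))" using c k
      by (simp add: minus_div_mult_eq_mod[symmetric] algebra_simps)
    have umd: "(u mod L) div a = k - c * (u div L)" using um assms(1) by simp
    have ud: "u div a = k" using k assms(1) by simp
    have vm: "v mod L = v - L * (v div L)"
      by (simp add: minus_div_mult_eq_mod[symmetric] algebra_simps)
    have e: "v mod L - s * ((u mod L) div a) = (v - s * (u div a)) + ((s * c) * (u div L) - L * (v div L))"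
      unfolding vm umd ud by (simp add: algebra_simps)
    have "b dvd (s * c) * (u div L) - L * (v div L)"
      using assms(4,6) cdiv by (simp add: dvd_diff)
    hence "b dvd v mod L - s * ((u mod L) div a) \<longleftrightarrow> b dvd (v - s * (u div a))"
      unfolding e using dvd_add_left_iff by blast
    then show ?thesis using True assms(3) by (simp add: dvd_mod_iff)
  qed
  finally show ?thesis .
qed

lemma exist:
  fixes L :: int and H :: "(int \<times> int) set"
  assumes L: "L > 0" and sub: "H \<subseteq> {0..<L} \<times> {0..<L}" and one: "(0,0) \<in> H"
    and cl: "\<And>p q. p \<in> H \<Longrightarrow> q \<in> H \<Longrightarrow> ((fst p + fst q) mod L, (snd p + snd q) mod L) \<in> H"
  shows "\<exists>a b s. a > 0 \<and> b > 0 \<and> a dvd L \<and> b dvd L \<and> 0 \<le> s \<and> s < b \<and> b dvd s * (L div a) \<and>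
     H = {(p,q). 0 \<le> p \<and> p < L \<and> 0 \<le> q \<and> q < L \<and> a dvd p \<and> b dvd (q - s * (p div a))}"
proof -
  define S where "S u v \<longleftrightarrow> (u mod L, v mod L) \<in> H" for u v
  have S_add: "S (u + u') (v + v')" if "S u v" "S u' v'" for u v u' v'
    using cl[OF that[unfolded S_def]] unfolding S_def by (simp add: mod_add_eq)
  have S_0: "S 0 0" unfolding S_def using one by simp
  have S_mod: "S (u + L * m) (v + L * n) \<longleftrightarrow> S u v" for u v m n
    unfolding S_def by simp
  have S_nat: "S (int k * u) (int k * v)" if "S u v" for k u v
  proof (induction k)
    case 0 then show ?case using S_0 by simp
  next
    case (Suc k)
    have "S (int k * u + u) (int k * v + v)" using S_add[OF Suc that] .
    then show ?case by (simp add: algebra_simps)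
  qed
  have S_neg: "S (- u) (- v)" if "S u v" for u v
  proof -
    have "S (int (nat (L - 1)) * u) (int (nat (L - 1)) * v)" using S_nat[OF that] .
    hence "S ((L - 1) * u) ((L - 1) * v)" using L by simp
    hence "S ((L - 1) * u + L * (- u)) ((L - 1) * v + L * (- v))" using S_mod by blast
    then show ?thesis by (simp add: algebra_simps)
  qed
  have S_int: "S (k * u) (k * v)" if "S u v" for k u v
  proof (cases "k \<ge> 0")
    case True
    then show ?thesis using S_nat[OF that, of "nat k"] by simp
  next
    case False
    have "S (int (nat (-k)) * u) (int (nat (-k)) * v)" using S_nat[OF that] .
    hence "S (- (int (nat (-k)) * u)) (- (int (nat (-k)) * v))" by (rule S_neg)
    then show ?thesis using False by simp
  qed
  have S_diff: "S (u - u') (v - v')" if "S u v" "S u' v'" for u v u' v'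
    using S_add[OF that(1) S_neg[OF that(2)]] by simp
  have S_L0: "S L 0" "S 0 L" unfolding S_def using one by simp_all

  define an where "an = (LEAST n::nat. n > 0 \<and> (\<exists>v. S (int n) v))"
  have anex: "nat L > 0 \<and> (\<exists>v. S (int (nat L)) v)" using L S_L0 by auto
  have an1: "an > 0 \<and> (\<exists>v. S (int an) v)" unfolding an_def by (rule LeastI[of "\<lambda>n. n > 0 \<and> (\<exists>v. S (int n) v)", OF anex])
  have an2: "\<not> (\<exists>v. S (int n) v)" if "0 < n" "n < an" for n
    using not_less_Least[of n "\<lambda>n. n > 0 \<and> (\<exists>v. S (int n) v)"] that unfolding an_def by blast
  define a where "a = int an"
  have apos: "a > 0" using an1 a_def by simp
  obtain v0 where v0: "S a v0" using an1 a_def by blast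
  have a_dvd: "a dvd u" if "S u v" for u v
  proof (rule ccontr)
    assume nd: "\<not> a dvd u"
    have "S (u - (u div a) * a) (v - (u div a) * v0)" using S_diff[OF that S_int[OF v0]] .
    hence Sm: "S (u mod a) (v - (u div a) * v0)" by (simp add: minus_div_mult_eq_mod[symmetric] algebra_simps)
    have "u mod a \<noteq> 0" using nd by (simp add: dvd_eq_mod_eq_0)
    hence p: "0 < u mod a" using apos by (simp add: order_less_le)
    have q: "u mod a < a" using apos by simp
    have "0 < nat (u mod a)" "nat (u mod a) < an" using p q a_def by simp_all
    from an2[OF this] Sm p show False by simp
  qed

  define bn where "bn = (LEAST n::nat. n > 0 \<and> S 0 (int n))"
  have bnex: "nat L > 0 \<and> S 0 (int (nat L))" using L S_L0 by auto
  have bn1: "bn > 0 \<and> S 0 (int bn)" unfolding bn_def by (rule LeastI[of "\<lambda>n. n > 0 \<and> S 0 (int n)", OF bnex])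
  have bn2: "\<not> S 0 (int n)" if "0 < n" "n < bn" for n
    using not_less_Least[of n "\<lambda>n. n > 0 \<and> S 0 (int n)"] that unfolding bn_def by blast
  define b where "b = int bn"
  have bpos: "b > 0" using bn1 b_def by simp
  have Sb: "S 0 b" using bn1 b_def by simp
  have b_dvd: "b dvd v" if "S 0 v" for v
  proof (rule ccontr)
    assume nd: "\<not> b dvd v"
    have "S (0 - (v div b) * 0) (v - (v div b) * b)" using S_diff[OF that S_int[OF Sb]] .
    hence Sm: "S 0 (v mod b)" by (simp add: minus_div_mult_eq_mod[symmetric] algebra_simps)
    have "v mod b \<noteq> 0" using nd by (simp add: dvd_eq_mod_eq_0)
    hence p: "0 < v mod b" using bpos by (simp add: order_less_le)
    have q: "v mod b < b" using bpos by simp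
    have "0 < nat (v mod b)" "nat (v mod b) < bn" using p q b_def by simp_all
    from bn2[OF this] Sm p show False by simp
  qed
  have aL: "a dvd L" using a_dvd[OF S_L0(1)] .
  have bL: "b dvd L" using b_dvd[OF S_L0(2)] .
  define s where "s = v0 mod b"
  have Sas: "S a s"
  proof -
    have "S (a - (v0 div b) * 0) (v0 - (v0 div b) * b)" using S_diff[OF v0 S_int[OF Sb]] .
    then show ?thesis unfolding s_def by (simp add: minus_div_mult_eq_mod[symmetric] algebra_simps)
  qed
  have s0: "0 \<le> s" "s < b" unfolding s_def using bpos by simp_all
  have bs: "b dvd s * (L div a)"
  proof -
    have "S ((L div a) * a) ((L div a) * s)" by (rule S_int[OF Sas])
    hence "S L ((L div a) * s)" using aL by simp
    hence "S (L - L) ((L div a) * s - 0)" using S_diff S_L0(1) by blast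
    hence "b dvd (L div a) * s" using b_dvd by simp
    then show ?thesis by (simp add: mult.commute)
  qed
  have "H = {(p,q). 0 \<le> p \<and> p < L \<and> 0 \<le> q \<and> q < L \<and> a dvd p \<and> b dvd (q - s * (p div a))}"
  proof (rule equalityI; rule subsetI)
    fix z assume z: "z \<in> H"
    then obtain p q where pq: "z = (p,q)" "0 \<le> p" "p < L" "0 \<le> q" "q < L" using sub by force
    have Spq: "S p q" unfolding S_def using z pq by simp
    have ap: "a dvd p" using a_dvd[OF Spq] .
    have "S (p - (p div a) * a) (q - (p div a) * s)" using S_diff[OF Spq S_int[OF Sas]] .
    hence "S 0 (q - s * (p div a))" using ap by (simp add: mult.commute)
    hence "b dvd (q - s * (p div a))" by (rule b_dvd)
    then show "z \<in> {(p,q). 0 \<le> p \<and> p < L \<and> 0 \<le> q \<and> q < L \<and> a dvd p \<and> b dvd (q - s * (p div a))}"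
      using pq ap by simp
  next
    fix z assume "z \<in> {(p,q). 0 \<le> p \<and> p < L \<and> 0 \<le> q \<and> q < L \<and> a dvd p \<and> b dvd (q - s * (p div a))}"
    then obtain p q where pq: "z = (p,q)" "0 \<le> p" "p < L" "0 \<le> q" "q < L" "a dvd p" "b dvd (q - s * (p div a))"
      by blast
    obtain t where t: "q - s * (p div a) = b * t" using pq(7) by blast
    have "S ((p div a) * a + 0) ((p div a) * s + t * b)" using S_add[OF S_int[OF Sas] S_int[OF Sb]] by simp
    moreover have "(p div a) * a + 0 = p" using pq(6) by simp
    moreover have "(p div a) * s + t * b = q" using t by (simp add: algebra_simps)
    ultimately have "S p q" by simp
    then show "z \<in> H" unfolding S_def using pq by simp
  qed
  then show ?thesis using apos bpos aL bL s0 bs by blast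
qed

theorem proposition2p1:
  fixes L :: int and \<Lambda> :: "(int \<times> int) set"
  assumes "L > 0"
    and "subgroup \<Lambda> (ZL2 L)"
  shows "\<exists>!(a, b, s). a > 0 \<and> b > 0 \<and> a dvd L \<and> b dvd L \<and> 0 \<le> s \<and> s < b \<and>
            ((a * b) div gcd (a * b) L) dvd s \<and> \<Lambda> = mat_image L a s b"
proof -
  have sub: "\<Lambda> \<subseteq> {0..<L} \<times> {0..<L}" using subgroup.subset[OF assms(2)] by (simp add: ZL2_def)
  have one: "(0,0) \<in> \<Lambda>" using subgroup.one_closed[OF assms(2)] by (simp add: ZL2_def)
  have cl: "((fst p + fst q) mod L, (snd p + snd q) mod L) \<in> \<Lambda>" if "p \<in> \<Lambda>" "q \<in> \<Lambda>" for p q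
    using subgroup.m_closed[OF assms(2) that] by (simp add: ZL2_def)
  obtain a b s where abs: "a > 0" "b > 0" "a dvd L" "b dvd L" "0 \<le> s" "s < b" "b dvd s * (L div a)"
    and H: "\<Lambda> = {(p,q). 0 \<le> p \<and> p < L \<and> 0 \<le> q \<and> q < L \<and> a dvd p \<and> b dvd (q - s * (p div a))}"
    using exist[OF assms(1) sub one cl] by blast
  have Hm: "\<Lambda> = mat_image L a s b" using H char[OF abs(1-4) assms(1) abs(7)] by simp
  have c1: "((a * b) div gcd (a * b) L) dvd s" using arith_cond[OF abs(1,2,3) assms(1)] abs(7) by simp
  show ?thesis
  proof (rule ex1I[of _ "(a, b, s)"])
    show "case (a, b, s) of (a, b, s) \<Rightarrow> a > 0 \<and> b > 0 \<and> a dvd L \<and> b dvd L \<and> 0 \<le> s \<and> s < b \<and>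
            ((a * b) div gcd (a * b) L) dvd s \<and> \<Lambda> = mat_image L a s b"
      using abs Hm c1 by simp
  next
    fix y assume y: "case y of (a, b, s) \<Rightarrow> a > 0 \<and> b > 0 \<and> a dvd L \<and> b dvd L \<and> 0 \<le> s \<and> s < b \<and>
            ((a * b) div gcd (a * b) L) dvd s \<and> \<Lambda> = mat_image L a s b"
    obtain a' b' s' where yd: "y = (a', b', s')" by (cases y) auto
    have abs': "a' > 0" "b' > 0" "a' dvd L" "b' dvd L" "0 \<le> s'" "s' < b'"
      "((a' * b') div gcd (a' * b') L) dvd s'" and Hm': "\<Lambda> = mat_image L a' s' b'"
      using y yd by simp_all
    have bs': "b' dvd s' * (L div a')" using arith_cond[OF abs'(1,2,3) assms(1)] abs'(7) by simp
    have E: "a dvd u \<and> b dvd (v - s * (u div a)) \<longleftrightarrow> a' dvd u \<and> b' dvd (v - s' * (u div a'))" for u v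
      using charS[OF abs(1-4) assms(1) abs(7), of u v] charS[OF abs'(1-4) assms(1) bs', of u v] Hm Hm'
      by simp
    have "a dvd a'" using E[of a' s'] abs'(1) by simp
    moreover have "a' dvd a" using E[of a s] abs(1) by simp
    ultimately have ea: "a' = a" using abs(1) abs'(1) zdvd_antisym_nonneg by auto
    have "b' dvd b" using E[of 0 b] by simp
    moreover have "b dvd b'" using E[of 0 b'] by simp
    ultimately have eb: "b' = b" using abs(2) abs'(2) zdvd_antisym_nonneg by auto
    have "b dvd s' - s" using E[of a s'] ea abs(1) by simp
    then obtain t where t: "s' - s = b * t" by blast
    have "t = 0"
    proof (rule ccontr)
      assume "t \<noteq> 0"
      hence "b \<le> \<bar>b * t\<bar>" using abs(2) by (simp add: abs_mult mult_le_cancel_left1 abs_ge_self)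
      then show False using t abs(5,6) abs'(5,6) eb by linarith
    qed
    hence "s' = s" using t by simp
    then show "y = (a, b, s)" using yd ea eb by simp
  qed
qed

end
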